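(* Let $\phi:[0,1]\to[0,1]$ be a nondecreasing continuous function such that $\phi(x)>x$ for all $x\in(0,1)$, and let $q,w\in L_2[0,1]$. Let $V_{\phi,q,w}$ be the operator on $L_2[0,1]$ given by $(V_{\phi,q,w}f)(x)=q(x)\int_0^{\phi(x)}f(t)w(t)\,dt$. Then its Fredholm determinant is $$D_{V_{\phi,q,w}}(\lambda)=1+\sum_{n=1}^\infty(-1)^n\lambda^n\int_0^1\int_{\phi(t_1)}^1\cdots\int_{\phi(t_{n-1})}^1 q(t_1)w(t_1)\cdots q(t_n)w(t_n)\,dt_n\cdots dt_1 .$$
   Context: $V_{\phi,q,w}$ is the integral operator with kernel $k(x,t)=q(x)w(t)$ if $t\le\phi(x)$ and $k(x,t)=0$ otherwise. For an integral operator $K$ with kernel $k(x,t)$, the Fredholm determinant is $D_K(\lambda)=\sum_{n=0}^\infty\frac{(-1)^n}{n!}A_n\lambda^n$ with $A_0=1$ and $A_n=\int_{[0,1]^n}\det\big(k(t_i,t_j)\big)_{i,j=1}^n\,dt_1\cdots dt_n$. *)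

theory Defs
  imports "HOL-Analysis.Analysis"
begin

definition V_kernel :: "(real \<Rightarrow> real) \<Rightarrow> (real \<Rightarrow> complex) \<Rightarrow> (real \<Rightarrow> complex) \<Rightarrow> real \<Rightarrow> real \<Rightarrow> complex" where
  "V_kernel \<phi> q w x t = (if t \<le> \<phi> x then q x * w t else 0)"

definition det_n :: "nat \<Rightarrow> (nat \<Rightarrow> nat \<Rightarrow> complex) \<Rightarrow> complex" where
  "det_n n M = (\<Sum>p | p permutes {..<n}. of_int (sign p) * (\<Prod>i<n. M i (p i)))"

definition fredholm_coeff :: "(real \<Rightarrow> real \<Rightarrow> complex) \<Rightarrow> nat \<Rightarrow> complex" where
  "fredholm_coeff k n =
     integral\<^sup>L (Pi\<^sub>M {..<n} (\<lambda>_. lebesgue_on {0..1})) (\<lambda>t. det_n n (\<lambda>i j. k (t i) (t j)))"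

definition fredholm_det :: "(real \<Rightarrow> real \<Rightarrow> complex) \<Rightarrow> complex \<Rightarrow> complex" where
  "fredholm_det k z = (\<Sum>n. (-1) ^ n / of_nat (fact n) * fredholm_coeff k n * z ^ n)"

text \<open>Iterated integral: J 0 s = 1,
  J (n+1) s = int_s^1 q(t) w(t) J n (phi t) dt.
  Thus J n 0 = int_0^1 int_{phi t_1}^1 ... int_{phi t_{n-1}}^1 q(t_1)w(t_1)...q(t_n)w(t_n).\<close>
fun iter_int :: "(real \<Rightarrow> real) \<Rightarrow> (real \<Rightarrow> complex) \<Rightarrow> (real \<Rightarrow> complex) \<Rightarrow> nat \<Rightarrow> real \<Rightarrow> complex" where
  "iter_int \<phi> q w 0 s = 1"
| "iter_int \<phi> q w (Suc n) s =
     (LINT t:{s..1}|lebesgue. q t * w t * iter_int \<phi> q w n (\<phi> t))"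

end

theory Submission
  imports Defs "HOL-Probability.Infinite_Product_Measure" "Jordan_Normal_Form.Determinant"
begin


definition chain :: "(real \<Rightarrow> real) \<Rightarrow> nat \<Rightarrow> (nat \<Rightarrow> real) \<Rightarrow> bool" where
  "chain \<phi> n u \<longleftrightarrow> (\<forall>k. Suc k < n \<longrightarrow> \<phi> (u (Suc k)) < u k)"

definition Emat :: "(real \<Rightarrow> real) \<Rightarrow> (nat \<Rightarrow> real) \<Rightarrow> nat \<Rightarrow> nat \<Rightarrow> complex" where
  "Emat \<phi> t i j = (if t j \<le> \<phi> (t i) then 1 else 0)"

lemma det_n_V:
  "det_n n (\<lambda>i j. V_kernel \<phi> q w (t i) (t j)) =
     (\<Prod>i<n. q (t i) * w (t i)) * det_n n (Emat \<phi> t)"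
proof -
  have "(\<Prod>i<n. V_kernel \<phi> q w (t i) (t (p i))) =
        (\<Prod>i<n. q (t i) * w (t i)) * (\<Prod>i<n. Emat \<phi> t i (p i))"
    if p: "p permutes {..<n}" for p
  proof -
    have "(\<Prod>i<n. V_kernel \<phi> q w (t i) (t (p i))) =
          (\<Prod>i<n. q (t i) * w (t (p i)) * Emat \<phi> t i (p i))"
      by (rule prod.cong) (auto simp: V_kernel_def Emat_def)
    also have "\<dots> = (\<Prod>i<n. q (t i)) * (\<Prod>i<n. w (t (p i))) * (\<Prod>i<n. Emat \<phi> t i (p i))"
      by (simp add: prod.distrib)
    also have "(\<Prod>i<n. w (t (p i))) = (\<Prod>i<n. w (t i))"
      using prod.permute[OF p, of "\<lambda>i. w (t i)"] by (simp add: comp_def)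
    finally show ?thesis by (simp add: prod.distrib mult_ac)
  qed
  then show ?thesis
    unfolding det_n_def by (simp add: sum_distrib_left mult_ac)
qed

lemma det_n_JNF:
  "det_n n M = Determinant.det (mat n n (\<lambda>(i,j). M i j))"
proof -
  have "Determinant.det (mat n n (\<lambda>(i,j). M i j)) =
     (\<Sum>p \<in> {p. p permutes {0..<n}}. of_int (sign p) * (\<Prod>i = 0..<n. (mat n n (\<lambda>(i,j). M i j)) $$ (i, p i)))"
    by (rule det_def') simp
  also have "\<dots> = det_n n M"
    unfolding det_n_def lessThan_atLeast0
  proof (rule sum.cong[OF refl])
    fix p assume "p \<in> {p. p permutes {0..<n}}"
    then have p: "p permutes {0..<n}" by simp
    have "(\<Prod>i = 0..<n. (mat n n (\<lambda>(i,j). M i j)) $$ (i, p i)) = (\<Prod>i = 0..<n. M i (p i))"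
      by (rule prod.cong[OF refl]) (use p permutes_in_image[OF p] in auto)
    then show "of_int (sign p) * (\<Prod>i = 0..<n. (mat n n (\<lambda>(i,j). M i j)) $$ (i, p i)) =
        of_int (sign p) * (\<Prod>i = 0..<n. M i (p i))" by simp
  qed
  finally show ?thesis by simp
qed

lemma det_n_perm:
  assumes pi: "\<pi> permutes {..<n}"
  shows "det_n n (\<lambda>i j. M (\<pi> i) (\<pi> j)) = det_n n M"
proof -
  let ?S = "{p. p permutes {..<n}}"
  let ?f = "\<lambda>p. of_int (sign p) * (\<Prod>i<n. M (\<pi> i) (\<pi> (p i)))"
  have ipi: "inv_into UNIV \<pi> permutes {..<n}" using pi by (rule permutes_inv)
  have "det_n n (\<lambda>i j. M (\<pi> i) (\<pi> j)) = sum ?f ?S" unfolding det_n_def ..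
  also have "\<dots> = sum (\<lambda>p. ?f (inv_into UNIV \<pi> \<circ> p)) ?S"
    by (rule setum_permutations_compose_left[OF ipi])
  also have "\<dots> = sum (\<lambda>p. ?f ((inv_into UNIV \<pi> \<circ> p) \<circ> \<pi>)) ?S"
    using sum_permutations_compose_right[OF pi, of "\<lambda>p. ?f (inv_into UNIV \<pi> \<circ> p)"] by (simp add: comp_assoc)
  also have "\<dots> = sum (\<lambda>p. of_int (sign p) * (\<Prod>i<n. M i (p i))) ?S"
  proof (rule sum.cong[OF refl])
    fix p assume "p \<in> ?S"
    then have p: "p permutes {..<n}" by simp
    have perm: "permutation p" "permutation \<pi>" "permutation (inv_into UNIV \<pi>)"
      using p pi ipi by (auto intro: permutes_imp_permutation)
    have "sign ((inv_into UNIV \<pi> \<circ> p) \<circ> \<pi>) = sign (inv_into UNIV \<pi>) * sign p * sign \<pi>"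
      using perm by (simp add: sign_compose permutation_compose)
    also have "\<dots> = sign p"
      using perm by (simp add: sign_inverse)
    finally have s: "sign ((inv_into UNIV \<pi> \<circ> p) \<circ> \<pi>) = sign p" .
    have "(\<Prod>i<n. M (\<pi> i) (\<pi> (((inv_into UNIV \<pi> \<circ> p) \<circ> \<pi>) i))) = (\<Prod>i<n. M (\<pi> i) (p (\<pi> i)))"
      using permutes_inverses(1)[OF pi] by simp
    also have "\<dots> = (\<Prod>i<n. M i (p i))"
      using prod.permute[OF pi, of "\<lambda>i. M i (p i)"] by (simp add: comp_def)
    finally show "?f ((inv_into UNIV \<pi> \<circ> p) \<circ> \<pi>) = of_int (sign p) * (\<Prod>i<n. M i (p i))"
      using s by simp
  qed
  also have "\<dots> = det_n n M" unfolding det_n_def ..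
  finally show ?thesis .
qed

lemma sum_two:
  assumes "i < n"
  shows "(\<Sum>k = 0..<n. (if k = i then 1 else if k = Suc i then -1 else 0) * f k) =
         f i - (if Suc i < n then f (Suc i) else (0::complex))"
proof -
  have "(\<Sum>k = 0..<n. (if k = i then 1 else if k = Suc i then -1 else 0) * f k) =
        (\<Sum>k = 0..<n. (if k = i then f k else 0) - (if k = Suc i then f k else 0))"
    by (rule sum.cong) auto
  also have "\<dots> = (\<Sum>k = 0..<n. (if k = i then f k else 0)) - (\<Sum>k = 0..<n. (if k = Suc i then f k else 0))"
    by (rule sum_subtractf)
  finally show ?thesis using assms by (simp add: sum.delta)
qed

lemma det_staircase:
  assumes dec: "\<And>i j. i < j \<Longrightarrow> j < n \<Longrightarrow> u j < u i"
    and ge: "\<And>i. i < n \<Longrightarrow> u i \<le> \<phi> (u i)"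
  shows "det_n n (Emat \<phi> u) = (if chain \<phi> n u then 1 else 0)"
proof -
  define A where "A = mat n n (\<lambda>(i,j). Emat \<phi> u i j)"
  define L where "L = mat n n (\<lambda>(i,j). if j = i then 1 else if j = Suc i then -1 else (0::complex))"
  have A: "A \<in> carrier_mat n n" and L: "L \<in> carrier_mat n n" unfolding A_def L_def by auto
  have "upper_triangular L" unfolding L_def upper_triangular_def by auto
  then have dL: "Determinant.det L = 1"
    using det_upper_triangular[OF _ L] L by (simp add: prod_list_diag_prod L_def)
  define D where "D = L * A"
  have D: "D \<in> carrier_mat n n" unfolding D_def using A L by auto
  have Dij: "D $$ (i,j) = Emat \<phi> u i j - (if Suc i < n then Emat \<phi> u (Suc i) j else 0)"
    if "i < n" "j < n" for i j
  proof -
    have "D $$ (i,j) = (\<Sum>k = 0..<n. (if k = i then 1 else if k = Suc i then -1 else 0) * Emat \<phi> u k j)"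
      using that unfolding D_def L_def A_def
      by (simp add: scalar_prod_def)
    also have "\<dots> = Emat \<phi> u i j - (if Suc i < n then Emat \<phi> u (Suc i) j else 0)"
      by (rule sum_two[OF that(1)])
    finally show ?thesis .
  qed
  have low: "D $$ (i,j) = 0" if "i < j" "j < n" for i j
  proof -
    have "u j \<le> \<phi> (u i)" using dec[OF that] ge[of i] that by auto
    moreover have "Suc i < n \<Longrightarrow> u j \<le> \<phi> (u (Suc i))"
      using dec[of "Suc i" j] ge[of "Suc i"] that by (cases "Suc i = j") auto
    moreover have "Suc i < n" using that by auto
    ultimately show ?thesis using Dij[of i j] that by (simp add: Emat_def)
  qed
  have diag: "D $$ (i,i) = (if Suc i < n \<longrightarrow> \<phi> (u (Suc i)) < u i then 1 else 0)" if "i < n" for i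
    using Dij[OF that that] ge[OF that] by (auto simp: Emat_def)
  have "Determinant.det D = prod_list (diag_mat D)"
    by (rule det_lower_triangular[OF low D])
  also have "\<dots> = (\<Prod>i = 0..<n. D $$ (i,i))"
    using D by (simp add: prod_list_diag_prod)
  also have "\<dots> = (\<Prod>i = 0..<n. (if Suc i < n \<longrightarrow> \<phi> (u (Suc i)) < u i then 1 else 0))"
    by (rule prod.cong) (auto simp: diag)
  also have "\<dots> = (if chain \<phi> n u then 1 else 0)"
  proof (cases "chain \<phi> n u")
    case True
    then show ?thesis by (auto simp: chain_def intro!: prod.neutral)
  next
    case False
    then obtain k where k: "Suc k < n" "\<not> \<phi> (u (Suc k)) < u k" by (auto simp: chain_def)
    then show ?thesis using False by (auto intro!: bexI[of _ k])
  qed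
  finally have "Determinant.det D = (if chain \<phi> n u then 1 else 0)" .
  moreover have "Determinant.det D = Determinant.det A"
    unfolding D_def using det_mult[OF L A] dL by simp
  ultimately show ?thesis by (simp add: det_n_JNF A_def)
qed

definition dec :: "nat \<Rightarrow> (nat \<Rightarrow> real) \<Rightarrow> bool" where
  "dec n u \<longleftrightarrow> (\<forall>i j. i < j \<longrightarrow> j < n \<longrightarrow> u j < u i)"

lemma chain_dec:
  assumes ge: "\<And>i. i < n \<Longrightarrow> u i \<le> \<phi> (u i)" and c: "chain \<phi> n u"
  shows "dec n u"
  unfolding dec_def
proof (intro allI impI)
  fix i j assume "i < j" "j < n"
  then show "u j < u i"
  proof (induction j)
    case 0 then show ?case by simp
  next
    case (Suc j)
    have "u (Suc j) < u j"
      using c ge[of "Suc j"] Suc.prems unfolding chain_def by force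
    then show ?case using Suc by (cases "i = j") auto
  qed
qed

definition rank :: "(nat \<Rightarrow> real) \<Rightarrow> nat \<Rightarrow> nat \<Rightarrow> nat" where
  "rank t n i = card {j\<in>{..<n}. t i < t j}"

lemma rank_lt: assumes "i < n" shows "rank t n i < n"
proof -
  have "{j\<in>{..<n}. t i < t j} \<subseteq> {..<n} - {i}" by auto
  then have "rank t n i \<le> card ({..<n} - {i})" unfolding rank_def by (intro card_mono) auto
  then show ?thesis using assms by auto
qed

lemma rank_less: assumes "i < n" "j < n" "t i < t j" shows "rank t n j < rank t n i"
proof -
  have "{k\<in>{..<n}. t j < t k} \<subset> {k\<in>{..<n}. t i < t k}" using assms by auto
  then show ?thesis unfolding rank_def by (intro psubset_card_mono) auto
qed

lemma rank_inj: assumes "inj_on t {..<n}" shows "inj_on (rank t n) {..<n}"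
proof (rule inj_onI)
  fix i j assume i: "i \<in> {..<n}" and j: "j \<in> {..<n}" and r: "rank t n i = rank t n j"
  show "i = j"
  proof (rule ccontr)
    assume "i \<noteq> j"
    then have "t i \<noteq> t j" using assms i j by (auto dest: inj_onD)
    then have "t i < t j \<or> t j < t i" by auto
    then show False using rank_less[of i n j t] rank_less[of j n i t] i j r by auto
  qed
qed

lemma sort_exists:
  assumes inj: "inj_on t {..<n}"
  shows "\<exists>\<pi>. \<pi> permutes {..<n} \<and> dec n (t \<circ> \<pi>)"
proof -
  define \<rho> where "\<rho> i = (if i < n then rank t n i else i)" for i
  have ri: "inj_on \<rho> {..<n}" using rank_inj[OF inj] unfolding \<rho>_def inj_on_def by auto
  have sub: "\<rho> ` {..<n} \<subseteq> {..<n}" using rank_lt unfolding \<rho>_def by auto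
  have "\<rho> ` {..<n} = {..<n}" using ri sub by (simp add: endo_inj_surj)
  then have "bij_betw \<rho> {..<n} {..<n}" using ri by (simp add: bij_betw_def)
  then have rp: "\<rho> permutes {..<n}" by (rule bij_imp_permutes) (simp add: \<rho>_def)
  define \<pi> where "\<pi> = inv_into UNIV \<rho>"
  have pp: "\<pi> permutes {..<n}" unfolding \<pi>_def by (rule permutes_inv[OF rp])
  have rpi: "\<rho> (\<pi> a) = a" for a unfolding \<pi>_def using permutes_inverses(1)[OF rp] by simp
  have "dec n (t \<circ> \<pi>)" unfolding dec_def
  proof (intro allI impI)
    fix a b assume ab: "a < b" "b < n"
    have pa: "\<pi> a < n" and pb: "\<pi> b < n" using permutes_in_image[OF pp] ab by auto
    have ra: "rank t n (\<pi> a) = a" and rb: "rank t n (\<pi> b) = b"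
      using rpi[of a] rpi[of b] pa pb unfolding \<rho>_def by auto
    show "(t \<circ> \<pi>) b < (t \<circ> \<pi>) a"
    proof (rule ccontr)
      assume "\<not> (t \<circ> \<pi>) b < (t \<circ> \<pi>) a"
      then have "t (\<pi> a) < t (\<pi> b) \<or> t (\<pi> a) = t (\<pi> b)" by auto
      then show False
      proof
        assume "t (\<pi> a) < t (\<pi> b)"
        then show False using rank_less[OF pa pb, of t] ra rb ab by auto
      next
        assume "t (\<pi> a) = t (\<pi> b)"
        then have "\<pi> a = \<pi> b" using inj pa pb by (auto dest: inj_onD)
        then show False using rpi[of a] rpi[of b] ab by (metis less_irrefl)
      qed
    qed
  qed
  then show ?thesis using pp by blast
qed

lemma dec_inj: "dec n u \<Longrightarrow> inj_on u {..<n}"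
  unfolding dec_def inj_on_def by (metis lessThan_iff linorder_neqE_nat order_less_irrefl)

lemma dec_rank:
  assumes s: "\<sigma> permutes {..<n}" and d: "dec n (t \<circ> \<sigma>)" and k: "k < n"
  shows "rank t n (\<sigma> k) = k"
proof -
  have "{j\<in>{..<n}. t (\<sigma> k) < t j} = \<sigma> ` {m\<in>{..<n}. t (\<sigma> k) < t (\<sigma> m)}"
  proof -
    have "{..<n} = \<sigma> ` {..<n}" using permutes_image[OF s] by simp
    then show ?thesis by auto
  qed
  also have "{m\<in>{..<n}. t (\<sigma> k) < t (\<sigma> m)} = {..<k}"
  proof -
    have "m < k" if "m < n" "t (\<sigma> k) < t (\<sigma> m)" for m
    proof (rule ccontr)
      assume "\<not> m < k"
      then have "m = k \<or> k < m" by auto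
      then show False using d that unfolding dec_def by fastforce
    qed
    moreover have "t (\<sigma> k) < t (\<sigma> m)" if "m < k" for m
      using d that k unfolding dec_def by auto
    ultimately show ?thesis using k by auto
  qed
  finally have "{j\<in>{..<n}. t (\<sigma> k) < t j} = \<sigma> ` {..<k}" .
  moreover have "inj_on \<sigma> {..<k}" using permutes_inj[OF s] by (auto intro: inj_on_subset)
  ultimately show ?thesis unfolding rank_def by (simp add: card_image)
qed

lemma dec_unique:
  assumes s1: "\<sigma>1 permutes {..<n}" and s2: "\<sigma>2 permutes {..<n}"
    and d1: "dec n (t \<circ> \<sigma>1)" and d2: "dec n (t \<circ> \<sigma>2)"
  shows "\<sigma>1 = \<sigma>2"
proof
  fix k show "\<sigma>1 k = \<sigma>2 k"
  proof (cases "k < n")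
    case True
    have "inj_on (t \<circ> \<sigma>1) {..<n}" by (rule dec_inj[OF d1])
    then have "inj_on t (\<sigma>1 ` {..<n})" by (rule inj_on_imageI)
    then have inj: "inj_on t {..<n}" using permutes_image[OF s1] by simp
    have "rank t n (\<sigma>1 k) = rank t n (\<sigma>2 k)"
      using dec_rank[OF s1 d1 True] dec_rank[OF s2 d2 True] by simp
    moreover have "\<sigma>1 k \<in> {..<n}" "\<sigma>2 k \<in> {..<n}"
      using permutes_in_image[OF s1] permutes_in_image[OF s2] True by auto
    ultimately show ?thesis using rank_inj[OF inj] by (auto dest: inj_onD)
  next
    case False
    then show ?thesis using permutes_not_in[OF s1] permutes_not_in[OF s2] by auto
  qed
qed

lemma perm_bounded:
  assumes "\<sigma> permutes {..<n}" "\<forall>i<n. t i \<in> {0..1::real}"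
  shows "\<forall>i<n. (t \<circ> \<sigma>) i \<in> {0..1}"
  using assms permutes_in_image[OF assms(1)] by auto

lemma chain_unique:
  assumes t01: "\<forall>i<n. t i \<in> {0..1}" and ge: "\<forall>x\<in>{0..1}. x \<le> \<phi> x"
    and s1: "\<sigma>1 permutes {..<n}" and s2: "\<sigma>2 permutes {..<n}"
    and c1: "chain \<phi> n (t \<circ> \<sigma>1)" and d2: "dec n (t \<circ> \<sigma>2)"
  shows "\<sigma>1 = \<sigma>2"
proof -
  have "dec n (t \<circ> \<sigma>1)"
    by (rule chain_dec[OF _ c1]) (use perm_bounded[OF s1 t01] ge in auto)
  then show ?thesis using dec_unique[OF s1 s2 _ d2] by simp
qed

lemma det_E:
  assumes t01: "\<forall>i<n. t i \<in> {0..1}" and ge: "\<forall>x\<in>{0..1}. x \<le> \<phi> x"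
  shows "det_n n (Emat \<phi> t) = (if \<exists>\<sigma>. \<sigma> permutes {..<n} \<and> chain \<phi> n (t \<circ> \<sigma>) then 1 else 0)"
proof (cases "inj_on t {..<n}")
  case True
  obtain \<pi> where pp: "\<pi> permutes {..<n}" and d: "dec n (t \<circ> \<pi>)"
    using sort_exists[OF True] by blast
  have "det_n n (Emat \<phi> t) = det_n n (\<lambda>i j. Emat \<phi> t (\<pi> i) (\<pi> j))"
    by (rule det_n_perm[OF pp, symmetric])
  also have "\<dots> = det_n n (Emat \<phi> (t \<circ> \<pi>))"
    by (rule arg_cong[where f="det_n n"]) (auto simp: Emat_def fun_eq_iff)
  also have "\<dots> = (if chain \<phi> n (t \<circ> \<pi>) then 1 else 0)"
    by (rule det_staircase) (use d perm_bounded[OF pp t01] ge in \<open>auto simp: dec_def\<close>)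
  also have "chain \<phi> n (t \<circ> \<pi>) \<longleftrightarrow> (\<exists>\<sigma>. \<sigma> permutes {..<n} \<and> chain \<phi> n (t \<circ> \<sigma>))"
    using chain_unique[OF t01 ge _ pp _ d] pp by blast
  finally show ?thesis .
next
  case False
  then obtain i j where ij: "i < n" "j < n" "i \<noteq> j" "t i = t j"
    unfolding inj_on_def by auto
  have "det_n n (Emat \<phi> t) = Determinant.det (mat n n (\<lambda>(i,j). Emat \<phi> t i j))"
    by (rule det_n_JNF)
  also have "\<dots> = 0"
    by (rule det_identical_rows[OF _ ij(3) ij(1) ij(2)]) (use ij in \<open>auto simp: Emat_def\<close>)
  also have "\<not> (\<exists>\<sigma>. \<sigma> permutes {..<n} \<and> chain \<phi> n (t \<circ> \<sigma>))"
  proof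
    assume "\<exists>\<sigma>. \<sigma> permutes {..<n} \<and> chain \<phi> n (t \<circ> \<sigma>)"
    then obtain \<sigma> where s: "\<sigma> permutes {..<n}" and c: "chain \<phi> n (t \<circ> \<sigma>)" by blast
    have "dec n (t \<circ> \<sigma>)"
      by (rule chain_dec[OF _ c]) (use perm_bounded[OF s t01] ge in auto)
    then have "inj_on (t \<circ> \<sigma>) {..<n}" by (rule dec_inj)
    then have "inj_on t (\<sigma> ` {..<n})" by (rule inj_on_imageI)
    then show False using permutes_image[OF s] False by simp
  qed
  ultimately show ?thesis by simp
qed

lemma sum_chain:
  assumes t01: "\<forall>i<n. t i \<in> {0..1}" and ge: "\<forall>x\<in>{0..1}. x \<le> \<phi> x"
  shows "(\<Sum>\<sigma>\<in>{\<sigma>. \<sigma> permutes {..<n}}. (if chain \<phi> n (t \<circ> \<sigma>) then f \<sigma> else 0)) =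
    (if \<exists>\<sigma>. \<sigma> permutes {..<n} \<and> chain \<phi> n (t \<circ> \<sigma>)
     then f (SOME \<sigma>. \<sigma> permutes {..<n} \<and> chain \<phi> n (t \<circ> \<sigma>)) else (0::'a::comm_monoid_add))"
proof -
  have fin: "finite {\<sigma>. \<sigma> permutes {..<n}}" by (rule finite_permutations) simp
  have "(\<Sum>\<sigma>\<in>{\<sigma>. \<sigma> permutes {..<n}}. (if chain \<phi> n (t \<circ> \<sigma>) then f \<sigma> else 0)) =
        (\<Sum>\<sigma>\<in>{\<sigma>\<in>{\<sigma>. \<sigma> permutes {..<n}}. chain \<phi> n (t \<circ> \<sigma>)}. f \<sigma>)"
    by (rule sum.inter_filter[OF fin, symmetric])
  also have "\<dots> = (if \<exists>\<sigma>. \<sigma> permutes {..<n} \<and> chain \<phi> n (t \<circ> \<sigma>)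
     then f (SOME \<sigma>. \<sigma> permutes {..<n} \<and> chain \<phi> n (t \<circ> \<sigma>)) else 0)"
  proof (cases "\<exists>\<sigma>. \<sigma> permutes {..<n} \<and> chain \<phi> n (t \<circ> \<sigma>)")
    case True
    define \<sigma>0 where "\<sigma>0 = (SOME \<sigma>. \<sigma> permutes {..<n} \<and> chain \<phi> n (t \<circ> \<sigma>))"
    have s0: "\<sigma>0 permutes {..<n}" "chain \<phi> n (t \<circ> \<sigma>0)"
      using someI_ex[OF True] unfolding \<sigma>0_def by auto
    have d0: "dec n (t \<circ> \<sigma>0)"
      by (rule chain_dec[OF _ s0(2)]) (use perm_bounded[OF s0(1) t01] ge in auto)
    have e: "{\<sigma>\<in>{\<sigma>. \<sigma> permutes {..<n}}. chain \<phi> n (t \<circ> \<sigma>)} = {\<sigma>0}"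
      using chain_unique[OF t01 ge _ s0(1) _ d0] s0 by blast
    show ?thesis unfolding e using True by (simp add: \<sigma>0_def)
  next
    case False
    then have e: "{\<sigma>\<in>{\<sigma>. \<sigma> permutes {..<n}}. chain \<phi> n (t \<circ> \<sigma>)} = {}" by blast
    show ?thesis unfolding e using False by auto
  qed
  finally show ?thesis .
qed

definition Gf :: "(real \<Rightarrow> real) \<Rightarrow> (real \<Rightarrow> complex) \<Rightarrow> (real \<Rightarrow> complex) \<Rightarrow> nat \<Rightarrow> (nat \<Rightarrow> real) \<Rightarrow> complex" where
  "Gf \<phi> q w n u = (\<Prod>i<n. q (u i) * w (u i)) * (if chain \<phi> n u then 1 else 0)"

lemma det_sum:
  assumes t01: "\<forall>i<n. t i \<in> {0..1}" and ge: "\<forall>x\<in>{0..1}. x \<le> \<phi> x"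
  shows "det_n n (\<lambda>i j. V_kernel \<phi> q w (t i) (t j)) =
         (\<Sum>\<sigma>\<in>{\<sigma>. \<sigma> permutes {..<n}}. Gf \<phi> q w n (t \<circ> \<sigma>))"
proof -
  have "(\<Sum>\<sigma>\<in>{\<sigma>. \<sigma> permutes {..<n}}. Gf \<phi> q w n (t \<circ> \<sigma>)) =
      (\<Sum>\<sigma>\<in>{\<sigma>. \<sigma> permutes {..<n}}. (if chain \<phi> n (t \<circ> \<sigma>) then (\<Prod>i<n. q (t i) * w (t i)) else 0))"
  proof (rule sum.cong[OF refl])
    fix \<sigma> assume "\<sigma> \<in> {\<sigma>. \<sigma> permutes {..<n}}"
    then have s: "\<sigma> permutes {..<n}" by simp
    have "(\<Prod>i<n. q ((t \<circ> \<sigma>) i) * w ((t \<circ> \<sigma>) i)) = (\<Prod>i<n. q (t i) * w (t i))"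
      using prod.permute[OF s, of "\<lambda>i. q (t i) * w (t i)"] by (simp add: comp_def)
    then show "Gf \<phi> q w n (t \<circ> \<sigma>) = (if chain \<phi> n (t \<circ> \<sigma>) then (\<Prod>i<n. q (t i) * w (t i)) else 0)"
      unfolding Gf_def by simp
  qed
  also have "\<dots> = (\<Prod>i<n. q (t i) * w (t i)) * det_n n (Emat \<phi> t)"
    unfolding sum_chain[OF t01 ge] det_E[OF t01 ge] by auto
  finally show ?thesis by (simp add: det_n_V)
qed

lemma sum_chain_norm:
  assumes t01: "\<forall>i<n. t i \<in> {0..1}" and ge: "\<forall>x\<in>{0..1}. x \<le> \<phi> x"
  shows "(\<Sum>\<sigma>\<in>{\<sigma>. \<sigma> permutes {..<n}}. norm (Gf \<phi> q w n (t \<circ> \<sigma>))) \<le> (\<Prod>i<n. norm (q (t i) * w (t i)))"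
proof -
  have "(\<Sum>\<sigma>\<in>{\<sigma>. \<sigma> permutes {..<n}}. norm (Gf \<phi> q w n (t \<circ> \<sigma>))) =
      (\<Sum>\<sigma>\<in>{\<sigma>. \<sigma> permutes {..<n}}. (if chain \<phi> n (t \<circ> \<sigma>) then (\<Prod>i<n. norm (q (t i) * w (t i))) else 0))"
  proof (rule sum.cong[OF refl])
    fix \<sigma> assume "\<sigma> \<in> {\<sigma>. \<sigma> permutes {..<n}}"
    then have s: "\<sigma> permutes {..<n}" by simp
    have "(\<Prod>i<n. q ((t \<circ> \<sigma>) i) * w ((t \<circ> \<sigma>) i)) = (\<Prod>i<n. q (t i) * w (t i))"
      using prod.permute[OF s, of "\<lambda>i. q (t i) * w (t i)"] by (simp add: comp_def)
    then show "norm (Gf \<phi> q w n (t \<circ> \<sigma>)) = (if chain \<phi> n (t \<circ> \<sigma>) then (\<Prod>i<n. norm (q (t i) * w (t i))) else 0)"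
      unfolding Gf_def by (simp add: prod_norm)
  qed
  also have "\<dots> \<le> (\<Prod>i<n. norm (q (t i) * w (t i)))"
    unfolding sum_chain[OF t01 ge] by (simp add: prod_nonneg)
  finally show ?thesis .
qed



abbreviation L :: "real measure" where "L \<equiv> lebesgue_on {0..1}"
abbreviation P :: "nat \<Rightarrow> (nat \<Rightarrow> real) measure" where "P n \<equiv> Pi\<^sub>M {..<n} (\<lambda>_. L)"

lemma prob_L: "prob_space L"
  by (rule prob_spaceI) (simp add: emeasure_restrict_space)

lemma prob_P: "prob_space (P n)"
  by (rule prob_space_PiM) (simp add: prob_L)

lemma psf: "product_sigma_finite (\<lambda>_::nat. L)"
proof -
  interpret prob_space L by (rule prob_L)
  show ?thesis by (unfold_locales)
qed

fun Hf :: "(real \<Rightarrow> real) \<Rightarrow> (real \<Rightarrow> complex) \<Rightarrow> (real \<Rightarrow> complex) \<Rightarrow> nat \<Rightarrow> real \<Rightarrow> (nat \<Rightarrow> real) \<Rightarrow> complex" where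
  "Hf \<phi> q w 0 s t = 1"
| "Hf \<phi> q w (Suc n) s t = (if s < t n then q (t n) * w (t n) else 0) * Hf \<phi> q w n (\<phi> (t n)) t"

lemma chain_Suc: "chain \<phi> (Suc n) t \<longleftrightarrow> chain \<phi> n t \<and> (n = 0 \<or> \<phi> (t n) < t (n - 1))"
  unfolding chain_def
  apply (cases n)
   apply simp
  apply (auto simp: less_Suc_eq)
  done

lemma Hf_closed: "Hf \<phi> q w n s t = Gf \<phi> q w n t * (if n = 0 \<or> s < t (n - 1) then 1 else 0)"
proof (induction n arbitrary: s)
  case 0 then show ?case by (simp add: Gf_def chain_def)
next
  case (Suc n)
  show ?case unfolding Hf.simps Suc Gf_def chain_Suc by auto
qed

lemma Gf_Suc: "Gf \<phi> q w (Suc n) t = q (t n) * w (t n) * Hf \<phi> q w n (\<phi> (t n)) t"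
  unfolding Hf_closed Gf_def chain_Suc by auto

lemma Gf_local: "(\<And>i. i < n \<Longrightarrow> t i = t' i) \<Longrightarrow> Gf \<phi> q w n t = Gf \<phi> q w n t'"
  unfolding Gf_def chain_def by (auto intro!: prod.cong)

lemma Hf_local: "(\<And>i. i < n \<Longrightarrow> t i = t' i) \<Longrightarrow> Hf \<phi> q w n s t = Hf \<phi> q w n s t'"
  unfolding Hf_closed using Gf_local[of n t t'] by (cases n) auto

lemma Gf_norm: "norm (Gf \<phi> q w n t) \<le> (\<Prod>i<n. norm (q (t i) * w (t i)))"
  unfolding Gf_def by (simp add: prod_norm prod_nonneg)

lemma Hf_norm: "norm (Hf \<phi> q w n s t) \<le> (\<Prod>i<n. norm (q (t i) * w (t i)))"
  unfolding Hf_closed using Gf_norm[of \<phi> q w n t] by (auto simp: norm_mult prod_nonneg)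

lemma comp_meas:
  assumes "i < m" "f \<in> borel_measurable L"
  shows "(\<lambda>t. f (t i)) \<in> borel_measurable (P m)"
proof -
  have "i \<in> {..<m}" using assms by simp
  from measurable_compose[OF measurable_component_singleton[OF this] assms(2)] show ?thesis .
qed

lemma if_meas:
  fixes N :: "'a measure" and f g :: "'a \<Rightarrow> real"
  assumes "f \<in> borel_measurable N" "g \<in> borel_measurable N"
  shows "(\<lambda>x. if f x < g x then 1 else (0::complex)) \<in> borel_measurable N"
  by (rule measurable_If) (use borel_measurable_less[OF assms] in auto)

lemma chain_meas:
  fixes N :: "'a measure"
  assumes "\<And>i. i < n \<Longrightarrow> (\<lambda>x. T x i) \<in> borel_measurable N"
    and "\<And>i. i < n \<Longrightarrow> (\<lambda>x. \<phi> (T x i)) \<in> borel_measurable N"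
  shows "(\<lambda>x. if chain \<phi> n (T x) then 1 else (0::complex)) \<in> borel_measurable N"
proof -
  have eq: "(if chain \<phi> n (T x) then 1 else (0::complex)) =
    (\<Prod>k<n. if Suc k < n then (if \<phi> (T x (Suc k)) < T x k then 1 else 0) else 1)" for x
  proof (cases "chain \<phi> n (T x)")
    case True then show ?thesis by (subst prod.neutral) (auto simp: chain_def)
  next
    case False
    then obtain k where "Suc k < n" "\<not> \<phi> (T x (Suc k)) < T x k" by (auto simp: chain_def)
    then show ?thesis using False by (auto intro!: bexI[of _ k])
  qed
  show ?thesis unfolding eq
  proof (rule borel_measurable_prod)
    fix k assume "k \<in> {..<n}"
    show "(\<lambda>x. if Suc k < n then (if \<phi> (T x (Suc k)) < T x k then 1 else 0) else (1::complex))
        \<in> borel_measurable N"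
    proof (cases "Suc k < n")
      case True then show ?thesis by simp (intro if_meas assms, auto)
    next
      case False then show ?thesis by simp
    qed
  qed
qed

locale ctx =
  fixes \<phi> :: "real \<Rightarrow> real" and q w :: "real \<Rightarrow> complex"
  assumes phi_meas: "\<phi> \<in> borel_measurable L"
    and phi_range: "\<forall>x\<in>{0..1}. \<phi> x \<in> {0..1}"
    and ge: "\<forall>x\<in>{0..1}. x \<le> \<phi> x"
    and qm: "q \<in> borel_measurable L" and wm: "w \<in> borel_measurable L"
    and qwi: "integrable L (\<lambda>x. q x * w x)"
begin

lemma qw_meas: "(\<lambda>x. q x * w x) \<in> borel_measurable L"
  using qm wm by measurable

lemma id_meas: "(\<lambda>x. x) \<in> borel_measurable L"
  by (rule continuous_imp_measurable_on_sets_lebesgue) (auto intro: continuous_on_id)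

lemma Gf_meas:
  fixes N :: "'a measure"
  assumes T: "\<And>i. i < n \<Longrightarrow> (\<lambda>x. T x i) \<in> measurable N L"
  shows "(\<lambda>x. Gf \<phi> q w n (T x)) \<in> borel_measurable N"
proof -
  have c: "(\<lambda>x. f (T x i)) \<in> borel_measurable N" if "i < n" "f \<in> borel_measurable L" for f i
    using measurable_compose[OF T[OF that(1)] that(2)] .
  show ?thesis unfolding Gf_def
    by (intro borel_measurable_times borel_measurable_prod chain_meas c qw_meas id_meas phi_meas) auto
qed

lemma comp_L: "i < m \<Longrightarrow> (\<lambda>x. x i) \<in> measurable (P m) L"
  using measurable_component_singleton[of i "{..<m}" "\<lambda>_. L"] by simp

lemma normprod_int: "integrable (P n) (\<lambda>t. \<Prod>i<n. norm (q (t i) * w (t i)))"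
proof -
  interpret product_sigma_finite "\<lambda>_::nat. L" by (rule psf)
  show ?thesis
    by (rule product_integrable_prod[of "{..<n}" "\<lambda>_ x. norm (q x * w x)"]) (auto intro: qwi)
qed

lemma normprod_int_Suc: "integrable (P (Suc n)) (\<lambda>t. \<Prod>i<Suc n. norm (q (t i) * w (t i)))"
  by (rule normprod_int)

lemma Gf_int: "integrable (P n) (Gf \<phi> q w n)"
proof (rule Bochner_Integration.integrable_bound[OF normprod_int])
  show "Gf \<phi> q w n \<in> borel_measurable (P n)"
    using Gf_meas[of n "\<lambda>t. t"] comp_L by auto
  show "AE x in P n. norm (Gf \<phi> q w n x) \<le> norm (\<Prod>i<n. norm (q (x i) * w (x i)))"
    by (intro AE_I2) (use Gf_norm in \<open>auto simp: prod_nonneg\<close>)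
qed

lemma Hf_meas:
  fixes N :: "'a measure"
  assumes T: "\<And>i. i < n \<Longrightarrow> (\<lambda>x. T x i) \<in> measurable N L"
    and S: "S \<in> borel_measurable N"
  shows "(\<lambda>x. Hf \<phi> q w n (S x) (T x)) \<in> borel_measurable N"
proof -
  have g: "(\<lambda>x. Gf \<phi> q w n (T x)) \<in> borel_measurable N" by (rule Gf_meas[OF T])
  show ?thesis
  proof (cases n)
    case 0 then show ?thesis by simp
  next
    case (Suc m)
    have "(\<lambda>x. T x m) \<in> borel_measurable N"
      using measurable_compose[OF T id_meas, of m] Suc by simp
    then have "(\<lambda>x. if S x < T x m then 1 else (0::complex)) \<in> borel_measurable N"
      by (intro if_meas S)
    then show ?thesis unfolding Hf_closed using g Suc by simp
  qed
qed

lemma Jphi_meas: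
  assumes IH: "\<forall>s\<in>{0..1}. integral\<^sup>L (P n) (Hf \<phi> q w n s) = iter_int \<phi> q w n s"
  shows "(\<lambda>a. iter_int \<phi> q w n (\<phi> a)) \<in> borel_measurable L"
proof -
  interpret pn: prob_space "P n" by (rule prob_P)
  have m': "(\<lambda>x. Hf \<phi> q w n (\<phi> (fst x)) (snd x)) \<in> borel_measurable (L \<Otimes>\<^sub>M P n)"
  proof (rule Hf_meas)
    show "(\<lambda>x. snd x i) \<in> measurable (L \<Otimes>\<^sub>M P n) L" if "i < n" for i
      using measurable_compose[OF measurable_snd comp_L[OF that]] .
    show "(\<lambda>x. \<phi> (fst x)) \<in> borel_measurable (L \<Otimes>\<^sub>M P n)"
      using measurable_compose[OF measurable_fst phi_meas] .
  qed
  have "(\<lambda>(a, y). Hf \<phi> q w n (\<phi> a) y) = (\<lambda>x. Hf \<phi> q w n (\<phi> (fst x)) (snd x))" by auto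
  with m' have "(\<lambda>(a, y). Hf \<phi> q w n (\<phi> a) y) \<in> borel_measurable (L \<Otimes>\<^sub>M P n)" by simp
  then have "(\<lambda>a. integral\<^sup>L (P n) (Hf \<phi> q w n (\<phi> a))) \<in> borel_measurable L"
    by (rule pn.borel_measurable_lebesgue_integral)
  moreover have "integral\<^sup>L (P n) (Hf \<phi> q w n (\<phi> a)) = iter_int \<phi> q w n (\<phi> a)" if "a \<in> space L" for a
    using IH phi_range that by auto
  ultimately show ?thesis using measurable_cong by (metis (no_types, lifting))
qed

lemma step:
  assumes IH: "\<forall>s\<in>{0..1}. integrable (P n) (Hf \<phi> q w n s) \<and> integral\<^sup>L (P n) (Hf \<phi> q w n s) = iter_int \<phi> q w n s"
    and cm: "c \<in> borel_measurable L" and cb: "\<forall>a\<in>{0..1}. norm (c a) \<le> norm (q a * w a)"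
  shows "integrable (P (Suc n)) (\<lambda>t. c (t n) * Hf \<phi> q w n (\<phi> (t n)) t)" (is "integrable _ ?F")
    and "integral\<^sup>L (P (Suc n)) (\<lambda>t. c (t n) * Hf \<phi> q w n (\<phi> (t n)) t) =
         integral\<^sup>L L (\<lambda>a. c a * iter_int \<phi> q w n (\<phi> a))"
proof -
  have Fm: "?F \<in> borel_measurable (P (Suc n))"
  proof (intro borel_measurable_times Hf_meas)
    show "(\<lambda>t. c (t n)) \<in> borel_measurable (P (Suc n))"
      using measurable_compose[OF comp_L cm, of n "Suc n"] by simp
    show "(\<lambda>t. \<phi> (t n)) \<in> borel_measurable (P (Suc n))"
      using measurable_compose[OF comp_L phi_meas, of n "Suc n"] by simp
    show "(\<lambda>x. x i) \<in> P (Suc n) \<rightarrow>\<^sub>M L" if "i < n" for i using comp_L that by simp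
  qed
  show int: "integrable (P (Suc n)) ?F"
  proof (rule Bochner_Integration.integrable_bound[OF normprod_int Fm])
    show "AE t in P (Suc n). norm (?F t) \<le> norm (\<Prod>i<Suc n. norm (q (t i) * w (t i)))"
    proof (intro AE_I2)
      fix t assume t: "t \<in> space (P (Suc n))"
      then have tn: "t n \<in> {0..1}" by (auto simp: space_PiM PiE_iff)
      have "norm (?F t) = norm (c (t n)) * norm (Hf \<phi> q w n (\<phi> (t n)) t)" by (simp add: norm_mult)
      also have "\<dots> \<le> norm (q (t n) * w (t n)) * (\<Prod>i<n. norm (q (t i) * w (t i)))"
        by (intro mult_mono cb[rule_format, OF tn] Hf_norm) auto
      also have "\<dots> = norm (\<Prod>i<Suc n. norm (q (t i) * w (t i)))"
        by (simp add: prod_nonneg mult_ac)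
      finally show "norm (?F t) \<le> norm (\<Prod>i<Suc n. norm (q (t i) * w (t i)))" .
    qed
  qed
  interpret product_sigma_finite "\<lambda>_::nat. L" by (rule psf)
  have eqset: "{..<Suc n} = {n} \<union> {..<n}" by auto
  have int': "integrable (Pi\<^sub>M ({n} \<union> {..<n}) (\<lambda>_. L)) ?F" using int by (simp only: eqset)
  have "integral\<^sup>L (P (Suc n)) ?F = integral\<^sup>L (Pi\<^sub>M ({n} \<union> {..<n}) (\<lambda>_. L)) ?F"
    by (simp only: eqset)
  also have "\<dots> = (\<integral>x. (\<integral>y. ?F (merge {n} {..<n} (x, y)) \<partial>P n) \<partial>Pi\<^sub>M {n} (\<lambda>_. L))"
    by (rule product_integral_fold[OF _ _ _ int']) auto
  also have "\<dots> = (\<integral>x. (\<lambda>a. c a * iter_int \<phi> q w n (\<phi> a)) (x n) \<partial>Pi\<^sub>M {n} (\<lambda>_. L))"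
  proof (rule Bochner_Integration.integral_cong[OF refl])
    fix x assume x: "x \<in> space (Pi\<^sub>M {n} (\<lambda>_. L))"
    then have xn: "x n \<in> {0..1}" by (auto simp: space_PiM PiE_iff)
    have "(\<integral>y. ?F (merge {n} {..<n} (x, y)) \<partial>P n) = (\<integral>y. c (x n) * Hf \<phi> q w n (\<phi> (x n)) y \<partial>P n)"
    proof (rule Bochner_Integration.integral_cong[OF refl])
      fix y
      have "Hf \<phi> q w n (\<phi> (x n)) (merge {n} {..<n} (x, y)) = Hf \<phi> q w n (\<phi> (x n)) y"
        by (rule Hf_local) (auto simp: merge_def)
      then show "?F (merge {n} {..<n} (x, y)) = c (x n) * Hf \<phi> q w n (\<phi> (x n)) y"
        by (simp add: merge_def)
    qed
    also have "\<dots> = c (x n) * iter_int \<phi> q w n (\<phi> (x n))"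
      using IH phi_range xn by simp
    finally show "(\<integral>y. ?F (merge {n} {..<n} (x, y)) \<partial>P n) = (\<lambda>a. c a * iter_int \<phi> q w n (\<phi> a)) (x n)"
      by simp
  qed
  also have "\<dots> = integral\<^sup>L L (\<lambda>a. c a * iter_int \<phi> q w n (\<phi> a))"
    by (rule product_integral_singleton) (intro borel_measurable_times cm Jphi_meas, use IH in auto)
  finally show "integral\<^sup>L (P (Suc n)) ?F = integral\<^sup>L L (\<lambda>a. c a * iter_int \<phi> q w n (\<phi> a))" .
qed

lemma conv:
  fixes h :: "real \<Rightarrow> complex"
  assumes s: "s \<in> {0..1}" and hm: "h \<in> borel_measurable L"
  shows "integral\<^sup>L L (\<lambda>a. (if s < a then 1 else 0) * h a) = (LINT a:{s..1}|lebesgue. h a)"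
proof -
  have sets: "{0..1::real} \<inter> space lebesgue \<in> sets lebesgue" by simp
  have k: "(\<lambda>a. (if s < a then 1 else 0) * h a) \<in> borel_measurable L"
    by (intro borel_measurable_times hm if_meas id_meas) auto
  have k2: "(\<lambda>a. indicator {s..1} a *\<^sub>R h a) \<in> borel_measurable L"
  proof -
    have "(\<lambda>a. (1 - (if a < s then 1 else 0)) * h a) \<in> borel_measurable L"
      by (intro borel_measurable_times borel_measurable_diff hm if_meas id_meas) auto
    moreover have "(1 - (if a < s then 1 else 0)) * h a = indicator {s..1} a *\<^sub>R h a" if "a \<in> space L" for a
      using that by (auto simp: indicator_def)
    ultimately show ?thesis using measurable_cong by (metis (no_types, lifting))
  qed
  have "integral\<^sup>L L (\<lambda>a. (if s < a then 1 else 0) * h a) =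
      integral\<^sup>L lebesgue (\<lambda>x. indicator {0..1} x *\<^sub>R ((if s < x then 1 else 0) * h x))"
    by (rule integral_restrict_space[OF sets])
  also have "\<dots> = integral\<^sup>L lebesgue (\<lambda>x. indicator {0..1} x *\<^sub>R (indicator {s..1} x *\<^sub>R h x))"
  proof (rule integral_cong_AE)
    show "(\<lambda>x. indicator {0..1} x *\<^sub>R ((if s < x then 1 else 0) * h x)) \<in> borel_measurable lebesgue"
      by (rule borel_measurable_restrict_space_iff[OF sets, THEN iffD1, OF k])
    show "(\<lambda>x. indicator {0..1} x *\<^sub>R (indicator {s..1} x *\<^sub>R h x)) \<in> borel_measurable lebesgue"
      by (rule borel_measurable_restrict_space_iff[OF sets, THEN iffD1, OF k2])
    have "AE x in lebesgue. x \<noteq> s" by (rule AE_completion[OF AE_lborel_singleton])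
    then show "AE x in lebesgue. indicator {0..1} x *\<^sub>R ((if s < x then 1 else 0) * h x) =
        indicator {0..1} x *\<^sub>R (indicator {s..1} x *\<^sub>R h x)"
      by eventually_elim (use s in \<open>auto simp: indicator_def\<close>)
  qed
  also have "\<dots> = (LINT a:{s..1}|lebesgue. h a)"
    unfolding set_lebesgue_integral_def
    by (rule Bochner_Integration.integral_cong[OF refl]) (use s in \<open>auto simp: indicator_def\<close>)
  finally show ?thesis .
qed

lemma main_int:
  "\<forall>s\<in>{0..1}. integrable (P n) (Hf \<phi> q w n s) \<and> integral\<^sup>L (P n) (Hf \<phi> q w n s) = iter_int \<phi> q w n s"
proof (induction n)
  case 0
  interpret prob_space "P 0" by (rule prob_P)
  have h: "Hf \<phi> q w 0 s = (\<lambda>_. 1)" for s by (rule ext) simp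
  show ?case unfolding h using prob_space integrable_const[of "1::complex"] by simp
next
  case (Suc n)
  show ?case
  proof
    fix s :: real assume s: "s \<in> {0..1}"
    define c where "c a = (if s < a then 1 else 0) * (q a * w a)" for a
    have cm: "c \<in> borel_measurable L" unfolding c_def
      by (intro borel_measurable_times qw_meas if_meas id_meas) auto
    have cb: "\<forall>a\<in>{0..1}. norm (c a) \<le> norm (q a * w a)" by (auto simp: c_def)
    have eq: "Hf \<phi> q w (Suc n) s = (\<lambda>t. c (t n) * Hf \<phi> q w n (\<phi> (t n)) t)"
      by (auto simp: c_def)
    have jm: "(\<lambda>a. iter_int \<phi> q w n (\<phi> a)) \<in> borel_measurable L"
      by (rule Jphi_meas) (use Suc.IH in auto)
    have "integral\<^sup>L L (\<lambda>a. c a * iter_int \<phi> q w n (\<phi> a)) =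
        integral\<^sup>L L (\<lambda>a. (if s < a then 1 else 0) * (q a * w a * iter_int \<phi> q w n (\<phi> a)))"
      by (simp add: c_def mult_ac)
    also have "\<dots> = iter_int \<phi> q w (Suc n) s"
      by (simp only: iter_int.simps conv[OF s] borel_measurable_times qw_meas jm)
    finally show "integrable (P (Suc n)) (Hf \<phi> q w (Suc n) s) \<and>
        integral\<^sup>L (P (Suc n)) (Hf \<phi> q w (Suc n) s) = iter_int \<phi> q w (Suc n) s"
      unfolding eq using step[OF Suc.IH cm cb] by simp
  qed
qed

lemma Gf_integral: "integral\<^sup>L (P n) (Gf \<phi> q w n) = iter_int \<phi> q w n 0"
proof (cases n)
  case 0
  interpret prob_space "P 0" by (rule prob_P)
  have h: "Gf \<phi> q w 0 = (\<lambda>_. 1)" by (rule ext) (simp add: Gf_def chain_def)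
  show ?thesis unfolding 0 h using prob_space by simp
next
  case (Suc m)
  have cm: "(\<lambda>x. q x * w x) \<in> borel_measurable L" by (rule qw_meas)
  have eq: "Gf \<phi> q w (Suc m) = (\<lambda>t. q (t m) * w (t m) * Hf \<phi> q w m (\<phi> (t m)) t)"
    by (auto simp: Gf_Suc)
  have "integral\<^sup>L (P (Suc m)) (Gf \<phi> q w (Suc m)) = integral\<^sup>L L (\<lambda>a. q a * w a * iter_int \<phi> q w m (\<phi> a))"
    unfolding eq by (rule step(2)[OF main_int cm]) auto
  also have "\<dots> = iter_int \<phi> q w (Suc m) 0"
    by (simp add: integral_restrict_space set_lebesgue_integral_def)
  finally show ?thesis using Suc by simp
qed

lemma reindex:
  fixes f :: "(nat \<Rightarrow> real) \<Rightarrow> 'b::{banach, second_countable_topology}"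
  assumes s: "\<sigma> permutes {..<n}" and fm: "f \<in> borel_measurable (P n)"
  shows "integral\<^sup>L (P n) (\<lambda>t. f (\<lambda>i\<in>{..<n}. t (\<sigma> i))) = integral\<^sup>L (P n) f"
    and "integrable (P n) (\<lambda>t. f (\<lambda>i\<in>{..<n}. t (\<sigma> i))) \<longleftrightarrow> integrable (P n) f"
proof -
  have T: "(\<lambda>t. \<lambda>i\<in>{..<n}. t (\<sigma> i)) \<in> measurable (P n) (P n)"
    by (rule measurable_restrict) (use comp_L permutes_in_image[OF s] in auto)
  have D: "distr (P n) (P n) (\<lambda>t. \<lambda>i\<in>{..<n}. t (\<sigma> i)) = P n"
    using distr_PiM_reindex[of "{..<n}" "\<lambda>_. L" \<sigma> "{..<n}"] prob_L
      permutes_inj_on[OF s] permutes_in_image[OF s] by auto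
  show "integral\<^sup>L (P n) (\<lambda>t. f (\<lambda>i\<in>{..<n}. t (\<sigma> i))) = integral\<^sup>L (P n) f"
    using integral_distr[OF T fm] D by simp
  show "integrable (P n) (\<lambda>t. f (\<lambda>i\<in>{..<n}. t (\<sigma> i))) \<longleftrightarrow> integrable (P n) f"
    using integrable_distr_eq[OF T fm] D by simp
qed

lemma Gf_meas_P: "Gf \<phi> q w n \<in> borel_measurable (P n)"
  using Gf_meas[of n "\<lambda>t. t"] comp_L by auto

lemma space_P: "t \<in> space (P n) \<Longrightarrow> \<forall>i<n. t i \<in> {0..1}"
  by (auto simp: space_PiM PiE_iff)

lemma Gf_restrict: "Gf \<phi> q w n (\<lambda>i\<in>{..<n}. t (\<sigma> i)) = Gf \<phi> q w n (t \<circ> \<sigma>)"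
  by (rule Gf_local) auto

lemma coeff: "fredholm_coeff (V_kernel \<phi> q w) n = of_nat (fact n) * iter_int \<phi> q w n 0"
proof -
  let ?S = "{\<sigma>. \<sigma> permutes {..<n}}"
  have int: "integrable (P n) (\<lambda>t. Gf \<phi> q w n (\<lambda>i\<in>{..<n}. t (\<sigma> i)))" if "\<sigma> \<in> ?S" for \<sigma>
    using reindex(2)[OF _ Gf_meas_P, of \<sigma>] that Gf_int by simp
  have "fredholm_coeff (V_kernel \<phi> q w) n =
      integral\<^sup>L (P n) (\<lambda>t. \<Sum>\<sigma>\<in>?S. Gf \<phi> q w n (\<lambda>i\<in>{..<n}. t (\<sigma> i)))"
    unfolding fredholm_coeff_def
    by (rule Bochner_Integration.integral_cong[OF refl])
       (use det_sum[OF space_P ge] in \<open>simp add: Gf_restrict\<close>)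
  also have "\<dots> = (\<Sum>\<sigma>\<in>?S. integral\<^sup>L (P n) (\<lambda>t. Gf \<phi> q w n (\<lambda>i\<in>{..<n}. t (\<sigma> i))))"
    by (rule Bochner_Integration.integral_sum[OF int])
  also have "\<dots> = (\<Sum>\<sigma>\<in>?S. iter_int \<phi> q w n 0)"
    by (rule sum.cong[OF refl]) (simp add: reindex(1)[OF _ Gf_meas_P] Gf_integral)
  also have "\<dots> = of_nat (fact n) * iter_int \<phi> q w n 0"
    using card_permutations[of "{..<n}" n] by simp
  finally show ?thesis .
qed

lemma bound:
  "norm (iter_int \<phi> q w n 0) \<le> (integral\<^sup>L L (\<lambda>x. norm (q x * w x))) ^ n / fact n"
proof -
  let ?S = "{\<sigma>. \<sigma> permutes {..<n}}"
  let ?g = "\<lambda>t. norm (Gf \<phi> q w n t)"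
  have gm: "?g \<in> borel_measurable (P n)" using Gf_meas_P by measurable
  have gi: "integrable (P n) ?g" using Gf_int by simp
  have int: "integrable (P n) (\<lambda>t. ?g (\<lambda>i\<in>{..<n}. t (\<sigma> i)))" if "\<sigma> \<in> ?S" for \<sigma>
    using reindex(2)[OF _ gm, of \<sigma>] that gi by simp
  have "fact n * norm (iter_int \<phi> q w n 0) \<le> fact n * integral\<^sup>L (P n) ?g"
    unfolding Gf_integral[symmetric] by (intro mult_left_mono integral_norm_bound) auto
  also have "\<dots> = (\<Sum>\<sigma>\<in>?S. integral\<^sup>L (P n) ?g)"
    using card_permutations[of "{..<n}" n] by simp
  also have "\<dots> = (\<Sum>\<sigma>\<in>?S. integral\<^sup>L (P n) (\<lambda>t. ?g (\<lambda>i\<in>{..<n}. t (\<sigma> i))))"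
    by (rule sum.cong[OF refl]) (simp add: reindex(1)[OF _ gm])
  also have "\<dots> = integral\<^sup>L (P n) (\<lambda>t. \<Sum>\<sigma>\<in>?S. ?g (\<lambda>i\<in>{..<n}. t (\<sigma> i)))"
    by (rule Bochner_Integration.integral_sum[OF int, symmetric])
  also have "\<dots> \<le> integral\<^sup>L (P n) (\<lambda>t. \<Prod>i<n. norm (q (t i) * w (t i)))"
  proof (rule integral_mono)
    show "integrable (P n) (\<lambda>t. \<Sum>\<sigma>\<in>?S. ?g (\<lambda>i\<in>{..<n}. t (\<sigma> i)))"
      using int by auto
    show "integrable (P n) (\<lambda>t. \<Prod>i<n. norm (q (t i) * w (t i)))" by (rule normprod_int)
    fix t assume t: "t \<in> space (P n)"
    show "(\<Sum>\<sigma>\<in>?S. ?g (\<lambda>i\<in>{..<n}. t (\<sigma> i))) \<le> (\<Prod>i<n. norm (q (t i) * w (t i)))"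
      using sum_chain_norm[OF space_P[OF t] ge, of q w] by (simp add: Gf_restrict)
  qed
  also have "\<dots> = (integral\<^sup>L L (\<lambda>x. norm (q x * w x))) ^ n"
  proof -
    interpret product_sigma_finite "\<lambda>_::nat. L" by (rule psf)
    show ?thesis
      by (subst product_integral_prod[of "{..<n}" "\<lambda>_ x. norm (q x * w x)"]) (auto intro: qwi)
  qed
  finally show ?thesis by (simp add: field_simps)
qed

lemma main:
  "(\<lambda>n. (-1) ^ n * z ^ n * iter_int \<phi> q w n 0) sums fredholm_det (V_kernel \<phi> q w) z"
proof -
  define C where "C = integral\<^sup>L L (\<lambda>x. norm (q x * w x))"
  have eq: "(\<lambda>n. (-1) ^ n / of_nat (fact n) * fredholm_coeff (V_kernel \<phi> q w) n * z ^ n) =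
      (\<lambda>n. (-1) ^ n * z ^ n * iter_int \<phi> q w n 0)"
    by (rule ext) (simp add: coeff)
  have "summable (\<lambda>n. (-1) ^ n * z ^ n * iter_int \<phi> q w n 0)"
  proof (rule summable_comparison_test[OF _ summable_exp[of "norm z * C"]])
    show "\<exists>N. \<forall>n\<ge>N. norm ((-1) ^ n * z ^ n * iter_int \<phi> q w n 0) \<le> inverse (fact n) * (norm z * C) ^ n"
    proof (intro exI allI impI)
      fix n :: nat
      have "norm ((-1) ^ n * z ^ n * iter_int \<phi> q w n 0) = norm z ^ n * norm (iter_int \<phi> q w n 0)"
        by (simp add: norm_mult norm_power)
      also have "\<dots> \<le> norm z ^ n * (C ^ n / fact n)"
        by (intro mult_left_mono bound[unfolded C_def[symmetric]]) auto
      also have "\<dots> = inverse (fact n) * (norm z * C) ^ n"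
        by (simp add: power_mult_distrib field_simps)
      finally show "norm ((-1) ^ n * z ^ n * iter_int \<phi> q w n 0) \<le> inverse (fact n) * (norm z * C) ^ n" .
    qed
  qed
  then show ?thesis
    unfolding fredholm_det_def eq by (rule summable_sums)
qed

end


lemma qw_L1:
  fixes q w :: "real \<Rightarrow> complex"
  assumes q_meas: "q \<in> borel_measurable (lebesgue_on {0..1})"
    and q_L2: "integrable (lebesgue_on {0..1}) (\<lambda>x. (norm (q x))\<^sup>2)"
    and w_meas: "w \<in> borel_measurable (lebesgue_on {0..1})"
    and w_L2: "integrable (lebesgue_on {0..1}) (\<lambda>x. (norm (w x))\<^sup>2)"
  shows "integrable L (\<lambda>x. q x * w x)"
proof (rule Bochner_Integration.integrable_bound[OF Bochner_Integration.integrable_add[OF q_L2 w_L2]])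
  show "(\<lambda>x. q x * w x) \<in> borel_measurable L" using q_meas w_meas by measurable
  show "AE x in L. norm (q x * w x) \<le> norm ((norm (q x))\<^sup>2 + (norm (w x))\<^sup>2)"
  proof (intro AE_I2)
    fix x
    have h: "0 \<le> (norm (q x) - norm (w x))\<^sup>2" by simp
    have p: "0 \<le> norm (q x) * norm (w x)" by simp
    have "2 * (norm (q x) * norm (w x)) \<le> (norm (q x))\<^sup>2 + (norm (w x))\<^sup>2"
      using h unfolding power2_eq_square by (simp add: algebra_simps)
    then have "norm (q x) * norm (w x) \<le> (norm (q x))\<^sup>2 + (norm (w x))\<^sup>2"
      using p by linarith
    then show "norm (q x * w x) \<le> norm ((norm (q x))\<^sup>2 + (norm (w x))\<^sup>2)"
      by (simp add: norm_mult)
  qed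
qed

lemma ge_lemma:
  fixes \<phi> :: "real \<Rightarrow> real"
  assumes phi_mono: "mono_on {0..1} \<phi>"
    and phi_range: "\<phi> ` {0..1} \<subseteq> {0..1}"
    and phi_gt: "\<And>x. 0 < x \<Longrightarrow> x < 1 \<Longrightarrow> \<phi> x > x"
  shows "\<forall>x\<in>{0..1}. x \<le> \<phi> x"
proof
  have pr: "\<forall>x\<in>{0..1}. \<phi> x \<in> {0..1}" by (rule image_subset_iff[THEN iffD1, OF phi_range])
  fix x :: real assume x: "x \<in> {0..1}"
  show "x \<le> \<phi> x"
  proof (cases "x = 0")
    case True
    have "\<phi> 0 \<in> {0..1}" using pr by simp
    then show ?thesis using True by simp
  next
    case x0: False
    show ?thesis
    proof (cases "x = 1")
      case False
      then have "0 < x" "x < 1" using x x0 by auto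
      then show ?thesis using phi_gt[of x] by simp
    next
      case True
      show ?thesis
      proof (rule ccontr)
        assume "\<not> x \<le> \<phi> x"
        then have lt: "\<phi> 1 < 1" using True by simp
        have p1: "\<phi> 1 \<in> {0..1}" using pr by simp
        then have p1': "0 \<le> \<phi> 1" by simp
        define y where "y = (\<phi> 1 + 1) / 2"
        have y0: "0 < y" using p1' unfolding y_def by (simp add: field_simps)
        have y1: "y < 1" using lt unfolding y_def by (simp add: field_simps)
        have yi: "y \<in> {0..1}" using y0 y1 by simp
        have oi: "(1::real) \<in> {0..1}" by simp
        have "\<phi> y \<le> \<phi> 1" using mono_onD[OF phi_mono yi oi] y1 by simp
        moreover have "y < \<phi> y" using phi_gt[OF y0 y1] .
        moreover have "\<phi> 1 < y" using lt unfolding y_def by (simp add: field_simps)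
        ultimately show False by simp
      qed
    qed
  qed
qed

theorem theorem5p6:
  fixes \<phi> :: "real \<Rightarrow> real" and q w :: "real \<Rightarrow> complex" and z :: complex
  assumes phi_mono: "mono_on {0..1} \<phi>"
    and phi_cont: "continuous_on {0..1} \<phi>"
    and phi_range: "\<phi> ` {0..1} \<subseteq> {0..1}"
    and phi_gt: "\<And>x. 0 < x \<Longrightarrow> x < 1 \<Longrightarrow> \<phi> x > x"
    and q_meas: "q \<in> borel_measurable (lebesgue_on {0..1})"
    and q_L2: "integrable (lebesgue_on {0..1}) (\<lambda>x. (norm (q x))\<^sup>2)"
    and w_meas: "w \<in> borel_measurable (lebesgue_on {0..1})"
    and w_L2: "integrable (lebesgue_on {0..1}) (\<lambda>x. (norm (w x))\<^sup>2)"
  shows "(\<lambda>n. (-1) ^ n * z ^ n * iter_int \<phi> q w n 0) sums fredholm_det (V_kernel \<phi> q w) z"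
proof -
  have ge: "\<forall>x\<in>{0..1}. x \<le> \<phi> x" by (rule ge_lemma[OF phi_mono phi_range phi_gt])
  interpret ctx \<phi> q w
  proof
    show "\<phi> \<in> borel_measurable L"
      by (rule continuous_imp_measurable_on_sets_lebesgue[OF phi_cont]) simp
    show "\<forall>x\<in>{0..1}. \<phi> x \<in> {0..1}" by (rule image_subset_iff[THEN iffD1, OF phi_range])
    show "\<forall>x\<in>{0..1}. x \<le> \<phi> x" by (rule ge)
    show "q \<in> borel_measurable L" by (rule q_meas)
    show "w \<in> borel_measurable L" by (rule w_meas)
    show "integrable L (\<lambda>x. q x * w x)" by (rule qw_L1[OF q_meas q_L2 w_meas w_L2])
  qed
  show ?thesis by (rule main)
qed

end
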